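(* Let $0\le t_0<R/2$ and $\theta_0\in[0,2\pi)$, and suppose $V\cap\mathcal A(t_0,\theta_0)=\emptyset$. Let $v,w\in V$ with $t_v,t_w\le t_0$ and angles satisfying $\theta_v<\theta_0<\theta_w$ with $\theta_w-\theta_v\le\pi$. Then $|\theta_v-\theta_w|>\theta^R(t_v,t_w)$; in particular $v$ and $w$ are not joined by an edge.
   Context: Model $\mathrm{Poi}_{\alpha,\nu}(n)$: fix $\alpha>1$, $\nu>0$, $R=2\log(n/\nu)$. Points are in polar coordinates $(r,\theta)$ of the native representation of the hyperbolic plane, with $\cosh d_h(u,u')=\cosh r_u\cosh r_{u'}-\sinh r_u\sinh r_{u'}\cos(\theta_u-\theta_{u'})$. $V$ is a Poisson point process on $\{r<R\}$ with intensity $\nu e^{R/2}\frac{1}{2\pi}\frac{\alpha\sinh(\alpha r)}{\cosh(\alpha R)-1}\,dr\,d\theta$; distinct $u,u'\in V$ are adjacent iff $d_h(u,u')\le R$. For a point $v$ write $t_v=R-r_v$ and identify $v$ with $(t_v,\theta_v)$. Angles are taken modulo $2\pi$ and $|\theta-\theta'|$ denotes circular distance. For $t_1,t_2\in[0,R/2]$, $\theta^R(t_1,t_2)=\arccos\bigl(\frac{\cosh(R-t_1)\cosh(R-t_2)-\cosh R}{\sinh(R-t_1)\sinh(R-t_2)}\bigr)$; vertices $u,v$ with $t_u,t_v\le R/2$ are adjacent iff $|\theta_u-\theta_v|\le\theta^R(t_u,t_v)$. Separation zone: for $0\le t_0<R/2$, $\theta_0\in[0,2\pi)$, $\mathcal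 A(t_0,\theta_0)=\{(t,\theta):0\le t\le t_0,\ |\theta-\theta_0|\le\theta^R(t,t)\}$. *)

theory Defs
  imports "HOL-Analysis.Analysis"
begin

definition hrad :: "nat \<Rightarrow> real \<Rightarrow> real" where
  "hrad n \<nu> = 2 * ln (real n / \<nu>)"

definition circ_dist :: "real \<Rightarrow> real \<Rightarrow> real" where
  "circ_dist a b =
     (let d = (a - b) - 2 * pi * of_int \<lfloor>(a - b) / (2 * pi)\<rfloor> in min d (2 * pi - d))"

definition hyp_dist :: "real \<Rightarrow> real \<Rightarrow> real \<Rightarrow> real \<Rightarrow> real" where
  "hyp_dist r1 th1 r2 th2 =
     arcosh (cosh r1 * cosh r2 - sinh r1 * sinh r2 * cos (th1 - th2))"

text \<open>A vertex is identified with (t, theta), where t = R - r.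
  Two distinct vertices are adjacent iff their hyperbolic distance is at most R.\<close>
definition adjacent :: "real \<Rightarrow> real \<times> real \<Rightarrow> real \<times> real \<Rightarrow> bool" where
  "adjacent R u u' \<longleftrightarrow> u \<noteq> u' \<and>
     hyp_dist (R - fst u) (snd u) (R - fst u') (snd u') \<le> R"

definition thetaR :: "real \<Rightarrow> real \<Rightarrow> real \<Rightarrow> real" where
  "thetaR R t1 t2 =
     arccos ((cosh (R - t1) * cosh (R - t2) - cosh R) / (sinh (R - t1) * sinh (R - t2)))"

definition sep_zone :: "real \<Rightarrow> real \<Rightarrow> real \<Rightarrow> (real \<times> real) set" where
  "sep_zone R t0 \<theta>0 = {(t, \<theta>). 0 \<le> t \<and> t \<le> t0 \<and> circ_dist \<theta> \<theta>0 \<le> thetaR R t t}"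

end

theory Submission
  imports Defs
begin

lemma circ_dist_small:
  assumes "-pi \<le> a - b" "a - b \<le> pi"
  shows "circ_dist a b = \<bar>a - b\<bar>"
proof (cases "a - b \<ge> 0")
  case True
  have "0 \<le> (a - b) / (2 * pi)" using True by simp
  moreover have "a - b < 2 * pi" using assms pi_gt_zero by linarith
  hence "(a - b) / (2 * pi) < 1" using pi_gt_zero by (simp add: divide_less_eq)
  ultimately have "\<lfloor>(a - b) / (2 * pi)\<rfloor> = 0" by (simp add: floor_eq_iff)
  thus ?thesis using True assms by (simp add: circ_dist_def Let_def)
next
  case False
  have "\<lfloor>(a - b) / (2 * pi)\<rfloor> = -1"
    using False assms pi_gt_zero by (subst floor_eq_iff) (auto simp: field_simps)
  thus ?thesis using False assms by (simp add: circ_dist_def Let_def)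
qed

lemma f_range:
  fixes a b R :: real
  assumes "0 < a" "0 < b" "a < R" "b < R" "R \<le> a + b"
  shows "-1 \<le> (cosh a * cosh b - cosh R) / (sinh a * sinh b)
       \<and> (cosh a * cosh b - cosh R) / (sinh a * sinh b) \<le> 1"
proof -
  have p: "sinh a * sinh b > 0" using assms by simp
  have "cosh R \<le> cosh (a + b)" using assms by (subst cosh_real_nonneg_le_iff) auto
  hence 1: "- (sinh a * sinh b) \<le> cosh a * cosh b - cosh R" by (simp add: cosh_add)
  have "cosh (a - b) = cosh \<bar>a - b\<bar>" 
  proof (cases "a \<ge> b")
    case True thus ?thesis by simp
  next
    case False hence "\<bar>a - b\<bar> = -(a - b)" by simp
    thus ?thesis by (simp only: cosh_minus)
  qed
  also have "\<dots> \<le> cosh R" using assms by (subst cosh_real_nonneg_le_iff) auto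
  finally have 2: "cosh a * cosh b - cosh R \<le> sinh a * sinh b" by (simp add: cosh_diff)
  show ?thesis using 1 2 p by (simp add: divide_simps)
qed

lemma f_mono:
  fixes a b R :: real
  assumes "0 < b" "b \<le> a"
  shows "(cosh b * cosh b - cosh R) / (sinh b * sinh b)
       \<le> (cosh a * cosh b - cosh R) / (sinh a * sinh b)"
proof -
  define d where "d = a - b"
  have a: "a = b + d" and d: "d \<ge> 0" using assms by (auto simp: d_def)
  have sa: "sinh a = sinh b * cosh d + cosh b * sinh d" unfolding a by (simp add: sinh_add)
  have ca: "cosh a = cosh b * cosh d + sinh b * sinh d" unfolding a by (simp add: cosh_add)
  have sq: "cosh b * cosh b = sinh b * sinh b + 1" using cosh_square_eq[of b] by (simp add: power2_eq_square)
  have sb: "sinh b > 0" using assms by simp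
  have sapos: "sinh a > 0" using assms by simp
  have sd: "sinh d \<ge> 0" using d by simp
  have cd: "cosh d \<ge> 1" "cosh R \<ge> 1" "cosh b \<ge> 1" by (auto simp: cosh_real_ge_1)
  have "(cosh a * cosh b - cosh R) * sinh b - (cosh b * cosh b - cosh R) * sinh a
      = cosh b * sinh d * (cosh R - 1) + cosh R * sinh b * (cosh d - 1)"
      proof -
    have "(cosh a * cosh b - cosh R) * sinh b - (cosh b * cosh b - cosh R) * sinh a
      = cosh b * sinh d * (cosh R - 1) + cosh R * sinh b * (cosh d - 1)
        - cosh b * sinh d * (cosh b * cosh b - sinh b * sinh b - 1)"
      unfolding sa ca by (simp add: algebra_simps)
    thus ?thesis using sq by simp
  qed
  also have "\<dots> \<ge> 0" using sd cd sb by (intro add_nonneg_nonneg mult_nonneg_nonneg) auto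
  finally have key: "(cosh b * cosh b - cosh R) * sinh a \<le> (cosh a * cosh b - cosh R) * sinh b"
    by simp
  define x where "x = cosh b * cosh b - cosh R"
  define y where "y = cosh a * cosh b - cosh R"
  have "x / (sinh b * sinh b) = (x * sinh a) / (sinh a * sinh b * sinh b)"
    using sb sapos by simp
  also have "\<dots> \<le> (y * sinh b) / (sinh a * sinh b * sinh b)"
    using key sb sapos unfolding x_def y_def by (intro divide_right_mono) auto
  also have "\<dots> = y / (sinh a * sinh b)" using sb sapos by simp
  finally show ?thesis unfolding x_def y_def .
qed

lemma thetaR_mono:
  fixes R t1 t2 :: real
  assumes "0 < t1" "t1 \<le> t2" "t2 < R / 2"
  shows "thetaR R t1 t2 \<le> thetaR R t2 t2"
  unfolding thetaR_def
proof (rule arccos_le_arccos)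
  show "- 1 \<le> (cosh (R - t2) * cosh (R - t2) - cosh R) / (sinh (R - t2) * sinh (R - t2))"
    using f_range[of "R - t2" "R - t2" R] assms by auto
  show "(cosh (R - t2) * cosh (R - t2) - cosh R) / (sinh (R - t2) * sinh (R - t2))
      \<le> (cosh (R - t1) * cosh (R - t2) - cosh R) / (sinh (R - t1) * sinh (R - t2))"
    using f_mono[of "R - t2" "R - t1" R] assms by auto
  show "(cosh (R - t1) * cosh (R - t2) - cosh R) / (sinh (R - t1) * sinh (R - t2)) \<le> 1"
    using f_range[of "R - t1" "R - t2" R] assms by auto
qed

lemma thetaR_nonneg:
  fixes R t :: real
  assumes "0 < t" "t < R / 2"
  shows "0 \<le> thetaR R t t"
  unfolding thetaR_def using f_range[of "R - t" "R - t" R] assms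
  by (intro arccos_lbound) auto

lemma thetaR_comm: "thetaR R t1 t2 = thetaR R t2 t1"
  unfolding thetaR_def by (simp add: mult.commute)

theorem mainTheorem3:
  fixes n :: nat and \<nu> R t0 \<theta>0 tv \<theta>v tw \<theta>w :: real and V :: "(real \<times> real) set"
  assumes "\<nu> > 0"
    and "R = hrad n \<nu>"
    and "V \<subseteq> {(t, \<theta>). 0 < t \<and> t \<le> R \<and> 0 \<le> \<theta> \<and> \<theta> < 2 * pi}"
    and "0 \<le> t0" and "t0 < R / 2"
    and "0 \<le> \<theta>0" and "\<theta>0 < 2 * pi"
    and "V \<inter> sep_zone R t0 \<theta>0 = {}"
    and "(tv, \<theta>v) \<in> V" and "(tw, \<theta>w) \<in> V"
    and "tv \<le> t0" and "tw \<le> t0"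
    and "\<theta>v < \<theta>0" and "\<theta>0 < \<theta>w" and "\<theta>w - \<theta>v \<le> pi"
  shows "circ_dist \<theta>v \<theta>w > thetaR R tv tw \<and> \<not> adjacent R (tv, \<theta>v) (tw, \<theta>w)"
proof -
  have tv: "0 < tv" and tw: "0 < tw" using assms(3,9,10) by auto
  have tvR: "tv < R / 2" and twR: "tw < R / 2" using assms by auto
  have "(tv, \<theta>v) \<notin> sep_zone R t0 \<theta>0" using assms(8,9) by blast
  hence "circ_dist \<theta>v \<theta>0 > thetaR R tv tv" using tv assms(11) by (auto simp: sep_zone_def)
  hence v: "\<theta>0 - \<theta>v > thetaR R tv tv" using assms(13-15) by (simp add: circ_dist_small)
  have "(tw, \<theta>w) \<notin> sep_zone R t0 \<theta>0" using assms(8,10) by blast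
  hence "circ_dist \<theta>w \<theta>0 > thetaR R tw tw" using tw assms(12) by (auto simp: sep_zone_def)
  hence w: "\<theta>w - \<theta>0 > thetaR R tw tw" using assms(13-15) by (simp add: circ_dist_small)
  have le: "thetaR R tv tw \<le> thetaR R tv tv + thetaR R tw tw"
  proof (cases "tv \<le> tw")
    case True
    thus ?thesis using thetaR_mono[of tv tw R] thetaR_nonneg[of tv R] tv twR tvR by linarith
  next
    case False
    thus ?thesis using thetaR_mono[of tw tv R] thetaR_nonneg[of tw R] tw twR tvR thetaR_comm[of R tv tw]
      by linarith
  qed
  have cd: "circ_dist \<theta>v \<theta>w = \<theta>w - \<theta>v" using assms(13-15) by (simp add: circ_dist_small)
  have gt: "\<theta>w - \<theta>v > thetaR R tv tw" using v w le by linarith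
  define a where "a = R - tv"
  define b where "b = R - tw"
  define f where "f = (cosh a * cosh b - cosh R) / (sinh a * sinh b)"
  have fr: "-1 \<le> f \<and> f \<le> 1" unfolding f_def a_def b_def
    using f_range[of "R - tv" "R - tw" R] tv tw tvR twR by auto
  have th: "thetaR R tv tw = arccos f" unfolding thetaR_def f_def a_def b_def ..
  have "cos (\<theta>w - \<theta>v) < cos (arccos f)"
    using gt th fr arccos_bounded[of f] assms(13-15)
    by (subst cos_mono_less_eq) auto
  hence cf: "cos (\<theta>w - \<theta>v) < f" using fr by simp
  have sab: "sinh a * sinh b > 0" using tvR twR tv tw by (simp add: a_def b_def)
  have "sinh a * sinh b * f = cosh a * cosh b - cosh R"
    unfolding f_def times_divide_eq_right by (rule nonzero_mult_div_cancel_left, use sab in linarith)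
  hence "cosh R = cosh a * cosh b - sinh a * sinh b * f" by linarith
  also have "\<dots> < cosh a * cosh b - sinh a * sinh b * cos (\<theta>v - \<theta>w)"
  proof -
    have "sinh a * sinh b * cos (\<theta>w - \<theta>v) < sinh a * sinh b * f"
      using cf sab by (rule mult_strict_left_mono)
    moreover have "cos (\<theta>v - \<theta>w) = cos (\<theta>w - \<theta>v)" by (metis cos_minus minus_diff_eq)
    ultimately show ?thesis by simp
  qed
  finally have lt: "cosh R < cosh a * cosh b - sinh a * sinh b * cos (\<theta>v - \<theta>w)" .
  have R0: "R \<ge> 0" using assms(4,5) by linarith
  have "R = arcosh (cosh R)" using R0 by (simp add: arcosh_cosh_real)
  also have "\<dots> < arcosh (cosh a * cosh b - sinh a * sinh b * cos (\<theta>v - \<theta>w))"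
    using lt cosh_real_ge_1[of R] by (subst arcosh_less_iff_real) auto
  finally have "hyp_dist a \<theta>v b \<theta>w > R" by (simp add: hyp_dist_def)
  hence "\<not> adjacent R (tv, \<theta>v) (tw, \<theta>w)" by (simp add: adjacent_def a_def b_def)
  thus ?thesis using cd gt by simp
qed

end
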